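(* Let $G$ be a finite simple graph on $[d]$, $k\ge1$, $<$ a monomial order on $R[G]$, and let $\{m_1,\dots,m_s\}$ be the set of all standard monomials of degree $k$ with respect to ${\rm in}_<(K_G)$. Then each $m_i$ equals ${\bf x}_{f_i}$ for a $k$-coloring $f_i$ of an induced subgraph of $G$; namely $m_i=x_{S_1}\cdots x_{S_k}$ with $S_1,\dots,S_k$ pairwise disjoint stable sets and $f_i$ is the coloring of $G[S_1\cup\dots\cup S_k]$ with $f_i(v)=\ell$ for $v\in S_\ell$. Moreover, for every induced subgraph $G'$ of $G$, the set $\{f_1,\dots,f_s\}\cap\mathcal{C}_k(G')$ is a complete representative system for ${\rm kc}(G',k)$.
   Context: A $k$-coloring of a graph $H$ is a map $f:V(H)\to[k]$ (not necessarily surjective) with $f(u)\neq f(v)$ for every edge; $\mathcal{C}_k(H)$ is the set of $k$-colorings of $H$. A Kempe switching: for colors $i<j$ and a connected component $C$ of $H[f^{-1}(i)\cup f^{-1}(j)]$, interchange $i$ and $j$ on $C$. Kempe equivalence $\sim_k$ is the equivalence relation generated by Kempe switchings, and ${\rm kc}(H,k)=\mathcal{C}_k(H)/\!\sim_k$. Colorings differing only by a permutation of colors are identified. A stable set of $G$ is a subset of $[d]$ with no edge of $G$ (including $\emptyset$ and singletons); $S(G)$ is the set of stable sets; $R[G]=\mathbb{K}[x_S : S\in S(G)]$ over a field $\mathbb{K}$, all variables of degree $1$. For a $k$-coloring $f$ of an induced subgraph, ${\bf x}_f=\prod_{\ell=1}^k x_{f^{-1}(\ell)}$. $J_G$ is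 the ideal generated by all ${\bf x}_f-{\bf x}_g$ with $f,g$ $2$-colorings of a common induced subgraph of $G$; $M_G=\langle x_Sx_T : S,T\in S(G),\ S\cap T\neq\emptyset\rangle$; $K_G=J_G+M_G$. A monomial is standard w.r.t. ${\rm in}_<(K_G)$ (the ideal generated by leading monomials of nonzero elements of $K_G$) if it does not lie in it. *)

theory Defs
  imports "HOL-Library.Poly_Mapping"
begin

definition simple_graph_on :: "nat \<Rightarrow> (nat \<Rightarrow> nat \<Rightarrow> bool) \<Rightarrow> bool" where
  "simple_graph_on d E \<longleftrightarrow> (\<forall>u v. E u v \<longrightarrow> E v u) \<and> (\<forall>v. \<not> E v v)
     \<and> (\<forall>u v. E u v \<longrightarrow> u \<in> {1..d} \<and> v \<in> {1..d})"

definition stable_sets :: "nat \<Rightarrow> (nat \<Rightarrow> nat \<Rightarrow> bool) \<Rightarrow> nat set set" where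
  "stable_sets d E = {S. S \<subseteq> {1..d} \<and> (\<forall>u\<in>S. \<forall>v\<in>S. \<not> E u v)}"

definition colorings :: "nat \<Rightarrow> (nat \<Rightarrow> nat \<Rightarrow> bool) \<Rightarrow> nat set \<Rightarrow> (nat \<Rightarrow> nat option) set" where
  "colorings k E W = {f. dom f = W \<and> ran f \<subseteq> {1..k} \<and>
      (\<forall>u\<in>W. \<forall>v\<in>W. E u v \<longrightarrow> f u \<noteq> f v)}"

definition component_of :: "(nat \<Rightarrow> nat \<Rightarrow> bool) \<Rightarrow> nat set \<Rightarrow> nat \<Rightarrow> nat set" where
  "component_of E A v = {u. u \<in> A \<and> (\<lambda>x y. x \<in> A \<and> y \<in> A \<and> E x y)\<^sup>*\<^sup>* v u}"

definition kempe_switch :: "nat \<Rightarrow> (nat \<Rightarrow> nat \<Rightarrow> bool) \<Rightarrow> nat set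
    \<Rightarrow> (nat \<Rightarrow> nat option) \<Rightarrow> (nat \<Rightarrow> nat option) \<Rightarrow> bool" where
  "kempe_switch k E W f g \<longleftrightarrow> f \<in> colorings k E W \<and>
     (\<exists>i j v. 1 \<le> i \<and> i < j \<and> j \<le> k \<and>
        (let A = {x \<in> W. f x = Some i \<or> f x = Some j}; C = component_of E A v in
          v \<in> A \<and>
          g = (\<lambda>x. if x \<in> C then (if f x = Some i then Some j else Some i) else f x)))"

definition color_perm :: "nat \<Rightarrow> (nat \<Rightarrow> nat \<Rightarrow> bool) \<Rightarrow> nat set
    \<Rightarrow> (nat \<Rightarrow> nat option) \<Rightarrow> (nat \<Rightarrow> nat option) \<Rightarrow> bool" where
  "color_perm k E W f g \<longleftrightarrow> f \<in> colorings k E W \<and>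
     (\<exists>\<sigma>. bij_betw \<sigma> {1..k} {1..k} \<and> g = map_option \<sigma> \<circ> f)"

text \<open>Kempe equivalence on C_k(G[W]) (with colour permutations identified): the
equivalence relation generated by Kempe switchings and colour permutations.\<close>
definition kempe_equiv :: "nat \<Rightarrow> (nat \<Rightarrow> nat \<Rightarrow> bool) \<Rightarrow> nat set
    \<Rightarrow> (nat \<Rightarrow> nat option) \<Rightarrow> (nat \<Rightarrow> nat option) \<Rightarrow> bool" where
  "kempe_equiv k E W = (\<lambda>f g. kempe_switch k E W f g \<or> kempe_switch k E W g f
        \<or> color_perm k E W f g \<or> color_perm k E W g f)\<^sup>*\<^sup>*"

type_synonym monom = "nat set \<Rightarrow>\<^sub>0 nat"
type_synonym 'a mpoly = "monom \<Rightarrow>\<^sub>0 'a"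

text \<open>Monomials of R[G]: exponent vectors supported on stable sets.\<close>
definition monoms :: "nat \<Rightarrow> (nat \<Rightarrow> nat \<Rightarrow> bool) \<Rightarrow> monom set" where
  "monoms d E = {m. Poly_Mapping.keys m \<subseteq> stable_sets d E}"

definition polys :: "nat \<Rightarrow> (nat \<Rightarrow> nat \<Rightarrow> bool) \<Rightarrow> 'a::field mpoly set" where
  "polys d E = {p. Poly_Mapping.keys p \<subseteq> monoms d E}"

definition mdeg :: "monom \<Rightarrow> nat" where
  "mdeg m = (\<Sum>S\<in>Poly_Mapping.keys m. Poly_Mapping.lookup m S)"

definition mono_poly :: "monom \<Rightarrow> 'a::field mpoly" where
  "mono_poly m = Poly_Mapping.single m 1"

definition ideal_gen :: "nat \<Rightarrow> (nat \<Rightarrow> nat \<Rightarrow> bool) \<Rightarrow> 'a::field mpoly set \<Rightarrow> 'a mpoly set" where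
  "ideal_gen d E B = {p. \<exists>n (q :: nat \<Rightarrow> 'a mpoly) (g :: nat \<Rightarrow> 'a mpoly). (\<forall>i<n. q i \<in> polys d E \<and> g i \<in> B) \<and> p = (\<Sum>i<n. q i * g i)}"

definition xmon :: "nat \<Rightarrow> (nat \<Rightarrow> nat option) \<Rightarrow> monom" where
  "xmon k f = (\<Sum>l\<in>{1..k}. Poly_Mapping.single {v. f v = Some l} 1)"

definition J_gens :: "nat \<Rightarrow> (nat \<Rightarrow> nat \<Rightarrow> bool) \<Rightarrow> 'a::field mpoly set" where
  "J_gens d E = {mono_poly (xmon 2 f) - mono_poly (xmon 2 g) | W f g.
      W \<subseteq> {1..d} \<and> f \<in> colorings 2 E W \<and> g \<in> colorings 2 E W}"

definition M_gens :: "nat \<Rightarrow> (nat \<Rightarrow> nat \<Rightarrow> bool) \<Rightarrow> 'a::field mpoly set" where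
  "M_gens d E = {mono_poly (Poly_Mapping.single S 1 + Poly_Mapping.single T 1) | S T.
      S \<in> stable_sets d E \<and> T \<in> stable_sets d E \<and> S \<inter> T \<noteq> {}}"

definition K_ideal :: "nat \<Rightarrow> (nat \<Rightarrow> nat \<Rightarrow> bool) \<Rightarrow> 'a::field mpoly set" where
  "K_ideal d E = ideal_gen d E (J_gens d E \<union> M_gens d E)"

definition monomial_order :: "nat \<Rightarrow> (nat \<Rightarrow> nat \<Rightarrow> bool) \<Rightarrow> (monom \<Rightarrow> monom \<Rightarrow> bool) \<Rightarrow> bool" where
  "monomial_order d E ord \<longleftrightarrow>
     (\<forall>a\<in>monoms d E. \<not> ord a a) \<and>
     (\<forall>a\<in>monoms d E. \<forall>b\<in>monoms d E. \<forall>c\<in>monoms d E. ord a b \<longrightarrow> ord b c \<longrightarrow> ord a c) \<and>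
     (\<forall>a\<in>monoms d E. \<forall>b\<in>monoms d E. a \<noteq> b \<longrightarrow> ord a b \<or> ord b a) \<and>
     (\<forall>a\<in>monoms d E. \<forall>b\<in>monoms d E. \<forall>c\<in>monoms d E. ord a b \<longrightarrow> ord (a + c) (b + c)) \<and>
     wfP (\<lambda>a b. a \<in> monoms d E \<and> b \<in> monoms d E \<and> ord a b)"

definition lead_mon :: "(monom \<Rightarrow> monom \<Rightarrow> bool) \<Rightarrow> 'a::field mpoly \<Rightarrow> monom" where
  "lead_mon ord p = (THE m. m \<in> Poly_Mapping.keys p \<and> (\<forall>n\<in>Poly_Mapping.keys p. n \<noteq> m \<longrightarrow> ord n m))"

definition init_ideal :: "nat \<Rightarrow> (nat \<Rightarrow> nat \<Rightarrow> bool) \<Rightarrow> (monom \<Rightarrow> monom \<Rightarrow> bool)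
    \<Rightarrow> 'a::field mpoly set \<Rightarrow> 'a mpoly set" where
  "init_ideal d E ord I = ideal_gen d E {mono_poly (lead_mon ord p) | p. p \<in> I \<and> p \<noteq> 0}"

definition std_monoms :: "'a::field itself \<Rightarrow> nat \<Rightarrow> (nat \<Rightarrow> nat \<Rightarrow> bool)
    \<Rightarrow> (monom \<Rightarrow> monom \<Rightarrow> bool) \<Rightarrow> nat \<Rightarrow> monom set" where
  "std_monoms _ d E ord k = {m \<in> monoms d E. mdeg m = k \<and>
      (mono_poly m :: 'a mpoly) \<notin> init_ideal d E ord (K_ideal d E)}"

end

theory Submission
  imports Defs
begin


lemma monoms_zero[simp]: "0 \<in> monoms d E" by (simp add: monoms_def)
lemma monoms_add: "a \<in> monoms d E \<Longrightarrow> b \<in> monoms d E \<Longrightarrow> a + b \<in> monoms d E"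
  unfolding monoms_def using keys_add[of a b] by (simp add: subset_iff) (meson UnE)

lemma polys_zero[simp]: "0 \<in> polys d E" by (simp add: polys_def)
lemma polys_one[simp]: "1 \<in> polys d E" by (simp add: polys_def)
lemma polys_add: "p \<in> polys d E \<Longrightarrow> q \<in> polys d E \<Longrightarrow> p + q \<in> polys d E"
  unfolding polys_def using keys_add[of p q] by (simp add: subset_iff) (meson UnE)
lemma polys_uminus: "p \<in> polys d E \<Longrightarrow> - p \<in> polys d E"
  unfolding polys_def by simp
lemma polys_diff: "p \<in> polys d E \<Longrightarrow> q \<in> polys d E \<Longrightarrow> p - q \<in> polys d E"
  unfolding polys_def using keys_diff[of p q] by (simp add: subset_iff) (meson UnE)
lemma polys_mult: "p \<in> polys d E \<Longrightarrow> q \<in> polys d E \<Longrightarrow> p * q \<in> polys d E"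
proof -
  assume a: "p \<in> polys d E" "q \<in> polys d E"
  show ?thesis unfolding polys_def mem_Collect_eq
  proof
    fix x assume "x \<in> Poly_Mapping.keys (p * q)"
    then obtain a b where "x = a + b" "a \<in> Poly_Mapping.keys p" "b \<in> Poly_Mapping.keys q"
      using keys_mult[of p q] by blast
    then show "x \<in> monoms d E" using a monoms_add unfolding polys_def by blast
  qed
qed
lemma polys_mono: "m \<in> monoms d E \<Longrightarrow> mono_poly m \<in> polys d E"
  unfolding polys_def mono_poly_def by simp
lemma polys_sum: "(\<And>i. i \<in> I \<Longrightarrow> f i \<in> polys d E) \<Longrightarrow> sum f I \<in> polys d E"
  by (induction I rule: infinite_finite_induct) (auto intro: polys_add)

lemma sum_lessThan_add_split:
  "(\<Sum>i<n+n'. h i) = (\<Sum>i<n. h i) + (\<Sum>i<n'. h (n + i))" for h :: "nat \<Rightarrow> 'b::comm_monoid_add"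
  by (induction n') (simp_all add: add.assoc)

lemma ideal_genE:
  assumes "p \<in> ideal_gen d E B"
  obtains n :: nat and q g where "\<forall>i<n. q i \<in> polys d E \<and> g i \<in> B" "p = (\<Sum>i<n. q i * g i)"
proof -
  from assms have "\<exists>n q g. (\<forall>i<(n::nat). q i \<in> polys d E \<and> g i \<in> B) \<and> p = (\<Sum>i<n. q i * g i)"
    unfolding ideal_gen_def by simp
  then obtain n :: nat and q g where "\<forall>i<(n::nat). q i \<in> polys d E \<and> g i \<in> B" "p = (\<Sum>i<n. q i * g i)"
    by blast
  then show ?thesis by (rule that)
qed

lemma ideal_genI:
  assumes "\<forall>i<(n::nat). q i \<in> polys d E \<and> g i \<in> B" "p = (\<Sum>i<n. q i * g i)"
  shows "p \<in> ideal_gen d E B"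
  using assms unfolding ideal_gen_def mem_Collect_eq by blast

lemma ideal_gen_subset: "B \<subseteq> polys d E \<Longrightarrow> ideal_gen d E B \<subseteq> polys d E"
  unfolding ideal_gen_def by (auto intro!: polys_sum polys_mult)

lemma ideal_gen_gen: "g \<in> B \<Longrightarrow> g \<in> ideal_gen d E B"
  unfolding ideal_gen_def
  by (rule CollectI, rule exI[of _ 1], rule exI[of _ "\<lambda>_. 1"], rule exI[of _ "\<lambda>_. g"]) simp

lemma ideal_gen_zero: "0 \<in> ideal_gen d E B"
  unfolding ideal_gen_def by (rule CollectI, rule exI[of _ 0]) simp

lemma ideal_gen_add:
  assumes "p \<in> ideal_gen d E B" "p' \<in> ideal_gen d E B"
  shows "p + p' \<in> ideal_gen d E B"
proof -
  from assms(1) obtain n :: nat and q g where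
    h1: "\<forall>i<n. q i \<in> polys d E \<and> g i \<in> B" "p = (\<Sum>i<n. q i * g i)"
    by (rule ideal_genE)
  from assms(2) obtain n' :: nat and q' g' where
    h2: "\<forall>i<n'. q' i \<in> polys d E \<and> g' i \<in> B" "p' = (\<Sum>i<n'. q' i * g' i)"
    by (rule ideal_genE)
  note h = h1 h2
  define Q where "Q = (\<lambda>i::nat. if i < n then q i else q' (i - n))"
  define G where "G = (\<lambda>i::nat. if i < n then g i else g' (i - n))"
  have "(\<Sum>i<n+n'. Q i * G i) = (\<Sum>i<n. Q i * G i) + (\<Sum>i<n'. Q (n + i) * G (n + i))"
    by (rule sum_lessThan_add_split) 
  also have "\<dots> = p + p'" using h by (simp add: Q_def G_def)
  finally have "p + p' = (\<Sum>i<n+n'. Q i * G i)" by simp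
  moreover have "\<forall>i<n+n'. Q i \<in> polys d E \<and> G i \<in> B" using h by (auto simp: Q_def G_def)
  ultimately show ?thesis by (intro ideal_genI) 
qed

lemma ideal_gen_mult:
  assumes "p \<in> ideal_gen d E B" "r \<in> polys d E"
  shows "r * p \<in> ideal_gen d E B"
proof -
  from assms(1) obtain n :: nat and q g where
    h: "\<forall>i<n. q i \<in> polys d E \<and> g i \<in> B" "p = (\<Sum>i<n. q i * g i)"
    by (rule ideal_genE)
  have "r * p = (\<Sum>i<n. (r * q i) * g i)" using h by (simp add: sum_distrib_left mult.assoc)
  moreover have "\<forall>i<n. r * q i \<in> polys d E \<and> g i \<in> B" using h assms by (auto intro: polys_mult)
  ultimately show ?thesis by (intro ideal_genI) 
qed

lemma ideal_gen_uminus: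
  assumes "p \<in> ideal_gen d E B" shows "- p \<in> ideal_gen d E B"
proof -
  have "(- 1) * p \<in> ideal_gen d E B" by (rule ideal_gen_mult[OF assms]) (simp add: polys_uminus)
  then show ?thesis by simp
qed

lemma ideal_gen_diff:
  "p \<in> ideal_gen d E B \<Longrightarrow> p' \<in> ideal_gen d E B \<Longrightarrow> p - p' \<in> ideal_gen d E B"
  using ideal_gen_add[of p d E B "- p'"] ideal_gen_uminus by fastforce



lemma mo_irrefl: "monomial_order d E ord \<Longrightarrow> a \<in> monoms d E \<Longrightarrow> \<not> ord a a"
  unfolding monomial_order_def by blast
lemma mo_trans: "monomial_order d E ord \<Longrightarrow> a \<in> monoms d E \<Longrightarrow> b \<in> monoms d E \<Longrightarrow> c \<in> monoms d E
  \<Longrightarrow> ord a b \<Longrightarrow> ord b c \<Longrightarrow> ord a c"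
  unfolding monomial_order_def by blast
lemma mo_total: "monomial_order d E ord \<Longrightarrow> a \<in> monoms d E \<Longrightarrow> b \<in> monoms d E \<Longrightarrow> a \<noteq> b
  \<Longrightarrow> ord a b \<or> ord b a"
  unfolding monomial_order_def by blast
lemma mo_add: "monomial_order d E ord \<Longrightarrow> a \<in> monoms d E \<Longrightarrow> b \<in> monoms d E \<Longrightarrow> c \<in> monoms d E
  \<Longrightarrow> ord a b \<Longrightarrow> ord (a + c) (b + c)"
  unfolding monomial_order_def by blast
lemma mo_wf: "monomial_order d E ord \<Longrightarrow> wfP (\<lambda>a b. a \<in> monoms d E \<and> b \<in> monoms d E \<and> ord a b)"
  unfolding monomial_order_def by blast

lemma mo_max_exists:
  assumes mo: "monomial_order d E ord" and "finite F" "F \<noteq> {}" "F \<subseteq> monoms d E"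
  shows "\<exists>m\<in>F. \<forall>n\<in>F. n \<noteq> m \<longrightarrow> ord n m"
  using assms(2,3,4)
proof (induction F rule: finite_ne_induct)
  case (singleton x) then show ?case by simp
next
  case (insert x F)
  then obtain m where m: "m \<in> F" "\<forall>n\<in>F. n \<noteq> m \<longrightarrow> ord n m" by auto
  have xm: "x \<noteq> m" using insert m by auto
  show ?case
  proof (cases "ord m x")
    case True
    have "\<forall>n\<in>insert x F. n \<noteq> x \<longrightarrow> ord n x"
    proof (intro ballI impI)
      fix n assume "n \<in> insert x F" "n \<noteq> x"
      then have "n \<in> F" by simp
      show "ord n x"
      proof (cases "n = m")
        case True then show ?thesis using \<open>ord m x\<close> by simp
      next
        case False
        then have nm: "ord n m" using m \<open>n \<in> F\<close> by blast
        show ?thesis using mo_trans[OF mo _ _ _ nm True] insert.prems \<open>n \<in> F\<close> m by auto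
      qed
    qed
    then show ?thesis by blast
  next
    case False
    then have "ord x m" using mo_total[OF mo, of x m] xm insert.prems m by auto
    then show ?thesis using m by auto
  qed
qed

lemma lead_mon_prop:
  assumes mo: "monomial_order d E ord" and p: "p \<in> polys d E" "p \<noteq> 0"
  shows "lead_mon ord p \<in> Poly_Mapping.keys p \<and>
    (\<forall>n\<in>Poly_Mapping.keys p. n \<noteq> lead_mon ord p \<longrightarrow> ord n (lead_mon ord p))"
proof -
  have K: "Poly_Mapping.keys p \<subseteq> monoms d E" using p by (simp add: polys_def)
  obtain m where m: "m \<in> Poly_Mapping.keys p" "\<forall>n\<in>Poly_Mapping.keys p. n \<noteq> m \<longrightarrow> ord n m"
    using mo_max_exists[OF mo finite_keys _ K] p by auto
  have "lead_mon ord p = m" unfolding lead_mon_def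
  proof (rule the_equality)
    fix m' assume m': "m' \<in> Poly_Mapping.keys p \<and> (\<forall>n\<in>Poly_Mapping.keys p. n \<noteq> m' \<longrightarrow> ord n m')"
    show "m' = m"
    proof (rule ccontr)
      assume "m' \<noteq> m"
      then have "ord m' m" "ord m m'" using m m' by auto
      then have "ord m m" using mo_trans[OF mo, of m m' m] K m m' by auto
      then show False using mo_irrefl[OF mo, of m] K m by auto
    qed
  qed (use m in auto)
  then show ?thesis using m by simp
qed

lemma lead_mon_mono:
  "lead_mon ord (mono_poly m :: 'a::field mpoly) = m"
  unfolding lead_mon_def mono_poly_def by (rule the_equality) auto

definition phi :: "monom set \<Rightarrow> 'a::field mpoly \<Rightarrow> 'a" where
  "phi C p = (\<Sum>m\<in>Poly_Mapping.keys p. if m \<in> C then Poly_Mapping.lookup p m else 0)"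

lemma phi_superset:
  assumes "finite X" "Poly_Mapping.keys p \<subseteq> X"
  shows "phi C p = (\<Sum>m\<in>X. if m \<in> C then Poly_Mapping.lookup p m else 0)"
  unfolding phi_def
  by (rule sum.mono_neutral_left[OF assms]) (auto simp: in_keys_iff)

lemma phi_add: "phi C (p + q) = phi C p + phi C q"
proof -
  let ?X = "Poly_Mapping.keys p \<union> Poly_Mapping.keys q \<union> Poly_Mapping.keys (p + q)"
  have f: "finite ?X" by simp
  have "phi C (p + q) = (\<Sum>m\<in>?X. if m \<in> C then Poly_Mapping.lookup (p + q) m else 0)"
    by (rule phi_superset[OF f]) auto
  also have "\<dots> = (\<Sum>m\<in>?X. (if m \<in> C then Poly_Mapping.lookup p m else 0) + (if m \<in> C then Poly_Mapping.lookup q m else 0))"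
    by (rule sum.cong) (auto simp: lookup_add)
  also have "\<dots> = (\<Sum>m\<in>?X. if m \<in> C then Poly_Mapping.lookup p m else 0) + (\<Sum>m\<in>?X. if m \<in> C then Poly_Mapping.lookup q m else 0)"
    by (rule sum.distrib)
  also have "\<dots> = phi C p + phi C q"
    by (subst phi_superset[OF f, of p], blast, subst phi_superset[OF f, of q], blast, rule refl)
  finally show ?thesis .
qed

lemma phi_zero[simp]: "phi C 0 = 0" by (simp add: phi_def)

lemma phi_sum: "phi C (sum f I) = (\<Sum>i\<in>I. phi C (f i))"
  by (induction I rule: infinite_finite_induct) (auto simp: phi_add)

lemma phi_uminus: "phi C (- p) = - phi C p"
  unfolding phi_def by (simp add: sum_negf[symmetric]) (rule sum.cong, auto)

lemma phi_diff: "phi C (p - q) = phi C p - phi C q"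
  using phi_add[of C p "- q"] phi_uminus[of C q] by simp

lemma phi_single: "phi C (Poly_Mapping.single m c) = (if m \<in> C then c else 0)"
  by (simp add: phi_def)

lemma poly_expand:
  "p = (\<Sum>u\<in>Poly_Mapping.keys p. Poly_Mapping.single u (Poly_Mapping.lookup p u))"
  by (rule poly_mapping_eqI) 
    (auto simp: lookup_sum lookup_single when_def in_keys_iff sum.delta)

lemma phi_mult_zero:
  assumes "\<And>u c. phi C (Poly_Mapping.single u c * g) = 0"
  shows "phi C (q * g) = 0"
proof -
  have "q * g = (\<Sum>u\<in>Poly_Mapping.keys q. Poly_Mapping.single u (Poly_Mapping.lookup q u) * g)"
    by (subst poly_expand[of q]) (simp add: sum_distrib_right)
  then show ?thesis by (simp add: phi_sum assms)
qed

lemma phi_ideal_zero: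
  assumes "\<And>g u c. g \<in> B \<Longrightarrow> phi C (Poly_Mapping.single u c * g) = 0"
    and "p \<in> ideal_gen d E B"
  shows "phi C p = 0"
proof -
  from assms(2) obtain n :: nat and q g where
    h: "\<forall>i<n. q i \<in> polys d E \<and> g i \<in> B" "p = (\<Sum>i<n. q i * g i)"
    by (rule ideal_genE)
  show ?thesis using h by (simp add: phi_sum phi_mult_zero assms(1))
qed

lemma keys_mono_mult:
  "x \<in> Poly_Mapping.keys (mono_poly u * (p :: 'a::field mpoly)) \<Longrightarrow> \<exists>n\<in>Poly_Mapping.keys p. x = u + n"
  using keys_mult[of "mono_poly u" p] unfolding mono_poly_def by auto


lemma mono_mult_expand:
  "mono_poly u * p = (\<Sum>n\<in>Poly_Mapping.keys p. Poly_Mapping.single (u + n) (Poly_Mapping.lookup p n :: 'a::field))"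
proof -
  have "mono_poly u * p = mono_poly u * (\<Sum>n\<in>Poly_Mapping.keys p. Poly_Mapping.single n (Poly_Mapping.lookup p n))"
    by (subst poly_expand[of p]) (rule refl)
  also have "\<dots> = (\<Sum>n\<in>Poly_Mapping.keys p. mono_poly u * Poly_Mapping.single n (Poly_Mapping.lookup p n))"
    by (rule sum_distrib_left)
  also have "\<dots> = (\<Sum>n\<in>Poly_Mapping.keys p. Poly_Mapping.single (u + n) (Poly_Mapping.lookup p n))"
    unfolding mono_poly_def by (simp add: mult_single)
  finally show ?thesis .
qed

lemma lookup_mono_mult:
  "Poly_Mapping.lookup (mono_poly u * p) (u + l) = (Poly_Mapping.lookup p l :: 'a::field)"
proof -
  have "Poly_Mapping.lookup (mono_poly u * p) (u + l) =
     (\<Sum>n\<in>Poly_Mapping.keys p. if n = l then Poly_Mapping.lookup p n else 0)"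
    unfolding mono_mult_expand[of u p] lookup_sum
    by (rule sum.cong) (auto simp: lookup_single when_def)
  then show ?thesis by (simp add: sum.delta in_keys_iff)
qed


abbreviation cls :: "(nat \<Rightarrow> nat option) \<Rightarrow> nat \<Rightarrow> nat set" where
  "cls h l \<equiv> {v. h v = Some l}"

definition rest :: "nat \<Rightarrow> (nat \<Rightarrow> nat option) \<Rightarrow> nat \<Rightarrow> nat \<Rightarrow> monom" where
  "rest k h i j = (\<Sum>l\<in>{1..k}-{i}-{j}. Poly_Mapping.single (cls h l) 1)"

lemma xmon_split:
  assumes "i \<in> {1..k}" "j \<in> {1..k}" "i \<noteq> j"
  shows "xmon k h = Poly_Mapping.single (cls h i) 1 + Poly_Mapping.single (cls h j) 1 + rest k h i j"
proof -
  have "xmon k h = Poly_Mapping.single (cls h i) 1 + (\<Sum>l\<in>{1..k}-{i}. Poly_Mapping.single (cls h l) 1)"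
    unfolding xmon_def by (rule sum.remove) (use assms in auto)
  also have "(\<Sum>l\<in>{1..k}-{i}. Poly_Mapping.single (cls h l) 1) =
     Poly_Mapping.single (cls h j) 1 + rest k h i j"
    unfolding rest_def by (rule sum.remove) (use assms in auto)
  finally show ?thesis by (simp add: add.assoc)
qed

lemma xmon2: "xmon 2 a = Poly_Mapping.single (cls a 1) 1 + Poly_Mapping.single (cls a 2) 1"
proof -
  have "{1..2::nat} = {1,2}" by auto
  then show ?thesis unfolding xmon_def by simp
qed

lemma sum_single_remove:
  assumes "finite L" "(\<Sum>l\<in>L. Poly_Mapping.single (c l) (1::nat)) = Poly_Mapping.single A 1 + u"
  shows "\<exists>i\<in>L. c i = A \<and> (\<Sum>l\<in>L-{i}. Poly_Mapping.single (c l) (1::nat)) = u"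
proof -
  have "Poly_Mapping.lookup (\<Sum>l\<in>L. Poly_Mapping.single (c l) (1::nat)) A \<ge> 1"
    unfolding assms(2) by (simp add: lookup_add)
  then have "(\<Sum>l\<in>L. Poly_Mapping.lookup (Poly_Mapping.single (c l) (1::nat)) A) \<noteq> 0"
    by (simp add: lookup_sum)
  then obtain i where i: "i \<in> L" "Poly_Mapping.lookup (Poly_Mapping.single (c i) (1::nat)) A \<noteq> 0"
    by (meson sum.not_neutral_contains_not_neutral)
  then have ci: "c i = A" by (simp add: lookup_single when_def split: if_splits)
  have "(\<Sum>l\<in>L. Poly_Mapping.single (c l) (1::nat)) = Poly_Mapping.single (c i) 1 + (\<Sum>l\<in>L-{i}. Poly_Mapping.single (c l) 1)"
    by (rule sum.remove) (use assms i in auto)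
  then have "(\<Sum>l\<in>L-{i}. Poly_Mapping.single (c l) (1::nat)) = u"
    using assms(2) ci by simp
  then show ?thesis using i ci by blast
qed

lemma xmon_decomp:
  assumes "xmon k h = Poly_Mapping.single A 1 + Poly_Mapping.single B 1 + u"
  shows "\<exists>i j. i \<in> {1..k} \<and> j \<in> {1..k} \<and> i \<noteq> j \<and> cls h i = A \<and> cls h j = B \<and> u = rest k h i j"
proof -
  from assms have "(\<Sum>l\<in>{1..k}. Poly_Mapping.single (cls h l) (1::nat)) = Poly_Mapping.single A 1 + (Poly_Mapping.single B 1 + u)"
    unfolding xmon_def by (simp add: add.assoc)
  from sum_single_remove[OF _ this] obtain i where i: "i \<in> {1..k}" "cls h i = A"
    "(\<Sum>l\<in>{1..k}-{i}. Poly_Mapping.single (cls h l) (1::nat)) = Poly_Mapping.single B 1 + u" by auto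
  have fin: "finite ({1..k}-{i})" by simp
  from sum_single_remove[OF fin i(3)] obtain j where j: "j \<in> {1..k}-{i}" "cls h j = B"
    "(\<Sum>l\<in>{1..k}-{i}-{j}. Poly_Mapping.single (cls h l) (1::nat)) = u" by blast
  show ?thesis unfolding rest_def
    by (rule exI[of _ i], rule exI[of _ j]) (use i j in auto)
qed

lemma col_cls_sub: "h \<in> colorings k E W \<Longrightarrow> cls h l \<subseteq> W"
  unfolding colorings_def by auto

lemma col_cls_stable:
  assumes "h \<in> colorings k E W" "W \<subseteq> {1..d}"
  shows "cls h l \<in> stable_sets d E"
proof -
  have "cls h l \<subseteq> W" by (rule col_cls_sub[OF assms(1)])
  moreover have "\<not> E u v" if "u \<in> cls h l" "v \<in> cls h l" for u v
  proof
    assume e: "E u v"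
    have "u \<in> W" "v \<in> W" using that \<open>cls h l \<subseteq> W\<close> by auto
    then have "h u \<noteq> h v" using e assms(1) unfolding colorings_def by blast
    then show False using that by simp
  qed
  ultimately show ?thesis using assms(2) unfolding stable_sets_def by blast
qed

lemma monoms_single: "S \<in> stable_sets d E \<Longrightarrow> Poly_Mapping.single S 1 \<in> monoms d E"
  unfolding monoms_def by simp

lemma monoms_sum: "(\<And>i. i \<in> I \<Longrightarrow> f i \<in> monoms d E) \<Longrightarrow> sum f I \<in> monoms d E"
  by (induction I rule: infinite_finite_induct) (auto intro: monoms_add)

lemma xmon_monoms:
  assumes "h \<in> colorings k E W" "W \<subseteq> {1..d}"
  shows "xmon k h \<in> monoms d E"
  unfolding xmon_def by (rule monoms_sum, rule monoms_single, rule col_cls_stable[OF assms])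

lemma rest_monoms:
  assumes "h \<in> colorings k E W" "W \<subseteq> {1..d}"
  shows "rest k h i j \<in> monoms d E"
  unfolding rest_def by (rule monoms_sum, rule monoms_single, rule col_cls_stable[OF assms])

lemma mdeg_superset:
  assumes "finite X" "Poly_Mapping.keys m \<subseteq> X"
  shows "mdeg m = (\<Sum>S\<in>X. Poly_Mapping.lookup m S)"
  unfolding mdeg_def by (rule sum.mono_neutral_left[OF assms]) (auto simp: in_keys_iff)

lemma mdeg_add: "mdeg (a + b) = mdeg a + mdeg b"
proof -
  let ?X = "Poly_Mapping.keys a \<union> Poly_Mapping.keys b \<union> Poly_Mapping.keys (a + b)"
  have f: "finite ?X" by simp
  show ?thesis
    by (subst mdeg_superset[OF f], blast, subst mdeg_superset[OF f, of a], blast,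
        subst mdeg_superset[OF f, of b], blast) (simp add: lookup_add sum.distrib)
qed

lemma mdeg_zero[simp]: "mdeg 0 = 0" by (simp add: mdeg_def)
lemma mdeg_single[simp]: "mdeg (Poly_Mapping.single S 1) = 1" by (simp add: mdeg_def)

lemma mdeg_sum: "mdeg (sum f I) = (\<Sum>i\<in>I. mdeg (f i))"
  by (induction I rule: infinite_finite_induct) (auto simp: mdeg_add)

lemma mdeg_xmon: "mdeg (xmon k h) = k"
  unfolding xmon_def mdeg_sum mdeg_single by simp



lemma mono_mult: "mono_poly a * mono_poly b = (mono_poly (a + b) :: 'a::field mpoly)"
  unfolding mono_poly_def by (simp add: mult_single)

lemma K_J: "g \<in> J_gens d E \<Longrightarrow> g \<in> K_ideal d E"
  unfolding K_ideal_def by (rule ideal_gen_gen) simp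

lemma K_M: "g \<in> M_gens d E \<Longrightarrow> g \<in> K_ideal d E"
  unfolding K_ideal_def by (rule ideal_gen_gen) simp

definition restr2 :: "nat \<Rightarrow> nat \<Rightarrow> (nat \<Rightarrow> nat option) \<Rightarrow> (nat \<Rightarrow> nat option)" where
  "restr2 i j h = (\<lambda>x. if h x = Some i then Some 1 else if h x = Some j then Some 2 else None)"

lemma restr2_cls1: "cls (restr2 i j h) 1 = cls h i"
  unfolding restr2_def by auto
lemma restr2_cls2: "i \<noteq> j \<Longrightarrow> cls (restr2 i j h) 2 = cls h j"
  unfolding restr2_def by auto

lemma restr2_col:
  assumes "h \<in> colorings k E W" "i \<noteq> j"
  shows "restr2 i j h \<in> colorings 2 E (cls h i \<union> cls h j)"
proof -
  have "dom (restr2 i j h) = cls h i \<union> cls h j" unfolding restr2_def dom_def by auto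
  moreover have "ran (restr2 i j h) \<subseteq> {1..2}" unfolding restr2_def ran_def by auto
  moreover have "restr2 i j h u \<noteq> restr2 i j h v"
    if "u \<in> cls h i \<union> cls h j" "v \<in> cls h i \<union> cls h j" "E u v" for u v
  proof -
    have "u \<in> W" "v \<in> W" using that col_cls_sub[OF assms(1)] by blast+
    then have "h u \<noteq> h v" using that(3) assms(1) unfolding colorings_def by blast
    then show ?thesis using that(1,2) assms(2) unfolding restr2_def by auto
  qed
  ultimately show ?thesis unfolding colorings_def by blast
qed

lemma two_color_change_K:
  fixes h h' :: "nat \<Rightarrow> nat option"
  assumes h: "h \<in> colorings k E W" and h': "h' \<in> colorings k E W" and W: "W \<subseteq> {1..d}"
    and ij: "i \<in> {1..k}" "j \<in> {1..k}" "i \<noteq> j"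
    and same: "\<forall>l\<in>{1..k}-{i}-{j}. cls h' l = cls h l"
    and A: "cls h i \<union> cls h j = cls h' i \<union> cls h' j"
  shows "(mono_poly (xmon k h) - mono_poly (xmon k h') :: 'a::field mpoly) \<in> K_ideal d E"
proof -
  let ?A = "cls h i \<union> cls h j"
  let ?a = "restr2 i j h" and ?b = "restr2 i j h'"
  have a: "?a \<in> colorings 2 E ?A" by (rule restr2_col[OF h ij(3)])
  have b: "?b \<in> colorings 2 E ?A" unfolding A by (rule restr2_col[OF h' ij(3)])
  have AW: "?A \<subseteq> {1..d}" using col_cls_sub[OF h] W by blast
  have gen: "(mono_poly (xmon 2 ?a) - mono_poly (xmon 2 ?b) :: 'a mpoly) \<in> J_gens d E"
    unfolding J_gens_def using a b AW by blast
  have R: "rest k h' i j = rest k h i j" unfolding rest_def using same by (intro sum.cong) auto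
  have ha: "xmon k h = rest k h i j + xmon 2 ?a"
    unfolding xmon_split[OF ij, of h] xmon2 restr2_cls1 restr2_cls2[OF ij(3)] by (simp add: ac_simps)
  have hb: "xmon k h' = rest k h i j + xmon 2 ?b"
    unfolding xmon_split[OF ij, of h'] xmon2 restr2_cls1 restr2_cls2[OF ij(3)] R by (simp add: ac_simps)
  have "mono_poly (rest k h i j) * (mono_poly (xmon 2 ?a) - mono_poly (xmon 2 ?b) :: 'a mpoly) \<in> K_ideal d E"
    unfolding K_ideal_def
    by (rule ideal_gen_mult[OF _ polys_mono[OF rest_monoms[OF h W]]]) (rule ideal_gen_gen, use gen in blast)
  then show ?thesis by (simp add: right_diff_distrib mono_mult ha hb)
qed

lemma comp_sub: "component_of E A v \<subseteq> A"
  unfolding component_of_def by auto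

lemma comp_step: "x \<in> component_of E A v \<Longrightarrow> y \<in> A \<Longrightarrow> E x y \<Longrightarrow> y \<in> component_of E A v"
  unfolding component_of_def by (auto intro: rtranclp.rtrancl_into_rtrancl)

lemma comp_self: "v \<in> A \<Longrightarrow> v \<in> component_of E A v"
  unfolding component_of_def by auto

lemma switch_props:
  assumes sym: "\<forall>u v. E u v \<longrightarrow> E v u"
    and h: "h \<in> colorings k E W" and ij: "i \<in> {1..k}" "j \<in> {1..k}" "i \<noteq> j"
    and A: "A = {x \<in> W. h x = Some i \<or> h x = Some j}"
    and h': "h' = (\<lambda>x. if x \<in> component_of E A v then (if h x = Some i then Some j else Some i) else h x)"
  shows "h' \<in> colorings k E W" "\<forall>l. l \<noteq> i \<longrightarrow> l \<noteq> j \<longrightarrow> cls h' l = cls h l"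
    "cls h i \<union> cls h j = cls h' i \<union> cls h' j"
proof -
  let ?C = "component_of E A v"
  have CA: "?C \<subseteq> A" by (rule comp_sub)
  have hW: "dom h = W" "ran h \<subseteq> {1..k}" "\<forall>u\<in>W. \<forall>v\<in>W. E u v \<longrightarrow> h u \<noteq> h v"
    using h unfolding colorings_def by auto
  have inA: "x \<in> A \<longleftrightarrow> h x = Some i \<or> h x = Some j" for x
    using hW(1) A by auto
  have "dom h' = W" using hW(1) CA A unfolding h' dom_def by auto
  moreover have "ran h' \<subseteq> {1..k}"
  proof
    fix c assume "c \<in> ran h'"
    then obtain x where x: "h' x = Some c" unfolding ran_def by auto
    show "c \<in> {1..k}"
    proof (cases "x \<in> ?C")
      case True then show ?thesis using x ij unfolding h' by (auto split: if_splits)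
    next
      case False then have "h x = Some c" using x unfolding h' by simp
      then show ?thesis using hW(2) by (auto simp: ran_def)
    qed
  qed
  moreover have "h' x \<noteq> h' y" if xy: "x \<in> W" "y \<in> W" "E x y" for x y
  proof -
    have hxy: "h x \<noteq> h y" using hW(3) xy by blast
    consider "x \<in> ?C" "y \<in> ?C" | "x \<in> ?C" "y \<notin> ?C" | "x \<notin> ?C" "y \<in> ?C" | "x \<notin> ?C" "y \<notin> ?C" by blast
    then show ?thesis
    proof cases
      case 1
      then have "x \<in> A" "y \<in> A" using CA by auto
      then show ?thesis using hxy inA[of x] inA[of y] ij(3) 1 unfolding h' by auto
    next
      case 2
      then have "y \<notin> A" using comp_step[of x E A v y] xy by auto
      then show ?thesis using inA[of y] 2 unfolding h' by auto
    next
      case 3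
      have "E y x" using sym xy by blast
      then have "x \<notin> A" using comp_step[of y E A v x] xy 3 by auto
      then show ?thesis using inA[of x] 3 unfolding h' by auto
    next
      case 4 then show ?thesis using hxy unfolding h' by auto
    qed
  qed
  ultimately show "h' \<in> colorings k E W" unfolding colorings_def by blast
  show "\<forall>l. l \<noteq> i \<longrightarrow> l \<noteq> j \<longrightarrow> cls h' l = cls h l"
  proof (intro allI impI)
    fix l assume l: "l \<noteq> i" "l \<noteq> j"
    show "cls h' l = cls h l"
    proof (intro set_eqI iffI; simp)
      fix x assume "h' x = Some l"
      then show "h x = Some l" using l unfolding h' by (auto split: if_splits)
    next
      fix x assume "h x = Some l"
      then have "x \<notin> A" using inA[of x] l by auto
      then have "x \<notin> ?C" using CA by auto
      then show "h' x = Some l" using \<open>h x = Some l\<close> unfolding h' by simp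
    qed
  qed
  show "cls h i \<union> cls h j = cls h' i \<union> cls h' j"
    using CA inA unfolding h' by (auto split: if_splits)
qed

lemma kempe_switch_K:
  assumes sym: "\<forall>u v. E u v \<longrightarrow> E v u" and W: "W \<subseteq> {1..d}"
    and ks: "kempe_switch k E W h h'"
  shows "h' \<in> colorings k E W \<and> (mono_poly (xmon k h) - mono_poly (xmon k h') :: 'a::field mpoly) \<in> K_ideal d E"
proof -
  from ks have h: "h \<in> colorings k E W" unfolding kempe_switch_def by blast
  from ks obtain i j v where ij: "1 \<le> i" "i < j" "j \<le> k" and
    h': "h' = (\<lambda>x. if x \<in> component_of E {x \<in> W. h x = Some i \<or> h x = Some j} v
          then (if h x = Some i then Some j else Some i) else h x)"
    unfolding kempe_switch_def Let_def by blast
  have ij': "i \<in> {1..k}" "j \<in> {1..k}" "i \<noteq> j" using ij by auto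
  note sp = switch_props[OF sym h ij' refl h']
  have "(mono_poly (xmon k h) - mono_poly (xmon k h') :: 'a::field mpoly) \<in> K_ideal d E"
    by (rule two_color_change_K[OF h sp(1) W ij']) (use sp(2,3) in auto)
  then show ?thesis using sp(1) by blast
qed

lemma color_perm_props:
  assumes cp: "color_perm k E W h h'"
  shows "h' \<in> colorings k E W \<and> xmon k h' = xmon k h"
proof -
  from cp obtain \<sigma> where h: "h \<in> colorings k E W" and s: "bij_betw \<sigma> {1..k} {1..k}"
    and h': "h' = map_option \<sigma> \<circ> h"
    unfolding color_perm_def by blast
  have hW: "dom h = W" "ran h \<subseteq> {1..k}" "\<forall>u\<in>W. \<forall>v\<in>W. E u v \<longrightarrow> h u \<noteq> h v"
    using h unfolding colorings_def by auto
  have inj: "inj_on \<sigma> {1..k}" using s bij_betw_def by blast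
  have hv: "h x = Some c \<Longrightarrow> c \<in> {1..k}" for x c using hW(2) by (auto simp: ran_def)
  have "dom h' = W" using hW(1) unfolding h' dom_def by auto
  moreover have "ran h' \<subseteq> {1..k}"
    using hv s unfolding h' ran_def bij_betw_def by auto
  moreover have "h' u \<noteq> h' v" if "u \<in> W" "v \<in> W" "E u v" for u v
  proof
    assume eq: "h' u = h' v"
    have "u \<in> dom h" "v \<in> dom h" using that hW(1) by auto
    then obtain a b where "h u = Some a" "h v = Some b" by blast
    moreover have "a \<noteq> b"
    proof
      assume "a = b"
      then have "h u = h v" using calculation by simp
      then show False using hW(3) that by blast
    qed
    ultimately show False using eq inj hv unfolding h' by (auto dest: inj_onD)
  qed
  ultimately have col: "h' \<in> colorings k E W" unfolding colorings_def by blast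
  have cl: "cls h' (\<sigma> l) = cls h l" if "l \<in> {1..k}" for l
  proof (intro set_eqI iffI; simp)
    fix x assume "h' x = Some (\<sigma> l)"
    then obtain c where c: "h x = Some c" "\<sigma> c = \<sigma> l" unfolding h' by auto
    then have "c = l" using inj hv[OF c(1)] that by (auto dest: inj_onD)
    then show "h x = Some l" using c by simp
  next
    fix x assume "h x = Some l" then show "h' x = Some (\<sigma> l)" unfolding h' by simp
  qed
  have "xmon k h' = (\<Sum>l\<in>{1..k}. Poly_Mapping.single (cls h' (\<sigma> l)) 1)"
    unfolding xmon_def by (rule sum.reindex_bij_betw[OF s, symmetric])
  also have "\<dots> = xmon k h" unfolding xmon_def by (rule sum.cong) (auto simp: cl)
  finally show ?thesis using col by blast
qed

lemma kempe_equiv_K: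
  assumes sym: "\<forall>u v. E u v \<longrightarrow> E v u" and W: "W \<subseteq> {1..d}"
    and ke: "kempe_equiv k E W g f" and g: "g \<in> colorings k E W"
  shows "f \<in> colorings k E W \<and> (mono_poly (xmon k g) - mono_poly (xmon k f) :: 'a::field mpoly) \<in> K_ideal d E"
  using ke unfolding kempe_equiv_def
proof (induction rule: rtranclp_induct)
  case base
  then show ?case using g by (simp add: K_ideal_def ideal_gen_zero)
next
  case (step y z)
  from step.IH have y: "y \<in> colorings k E W" and
    Ky: "(mono_poly (xmon k g) - mono_poly (xmon k y) :: 'a mpoly) \<in> K_ideal d E" by auto
  have "z \<in> colorings k E W \<and> (mono_poly (xmon k y) - mono_poly (xmon k z) :: 'a mpoly) \<in> K_ideal d E"
    using step.hyps(2)
  proof (elim disjE)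
    assume "kempe_switch k E W y z" then show ?thesis using kempe_switch_K[OF sym W] by blast
  next
    assume a: "kempe_switch k E W z y"
    then have z: "z \<in> colorings k E W" unfolding kempe_switch_def by blast
    have "(mono_poly (xmon k z) - mono_poly (xmon k y) :: 'a mpoly) \<in> K_ideal d E"
      using kempe_switch_K[OF sym W a] by blast
    from ideal_gen_uminus[OF this[unfolded K_ideal_def]] show ?thesis using z
      by (simp add: K_ideal_def)
  next
    assume "color_perm k E W y z" then show ?thesis using color_perm_props
      by (simp add: K_ideal_def ideal_gen_zero)
  next
    assume a: "color_perm k E W z y"
    then have z: "z \<in> colorings k E W" unfolding color_perm_def by blast
    show ?thesis using color_perm_props[OF a] z by (simp add: K_ideal_def ideal_gen_zero)
  qed
  then show ?case using Ky ideal_gen_add[of _ d E _ "mono_poly (xmon k y) - mono_poly (xmon k z)"]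
    unfolding K_ideal_def by fastforce
qed



lemma comp_D:
  assumes "(\<lambda>x y. x \<in> A \<and> y \<in> A \<and> E x y)\<^sup>*\<^sup>* v x"
    and step: "\<And>y z. y \<in> A \<Longrightarrow> z \<in> A \<Longrightarrow> E y z \<Longrightarrow> P y = P z"
  shows "P x = P v"
  using assms(1) by (induction rule: rtranclp_induct) (auto dest: step)

lemma flip:
  assumes sym: "\<forall>u v. E u v \<longrightarrow> E v u" and fin: "finite W"
    and ij: "i \<in> {1..k}" "j \<in> {1..k}" "i \<noteq> j" and b: "b \<in> colorings 2 E A"
  shows "g \<in> colorings k E W \<Longrightarrow> {x\<in>W. g x = Some i \<or> g x = Some j} = A \<Longrightarrow>
    kempe_equiv k E W g (\<lambda>x. if x \<in> A then (if b x = Some 1 then Some i else Some j) else g x)"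
proof (induction "card {x\<in>A. (g x = Some i) \<noteq> (b x = Some 1)}" arbitrary: g rule: less_induct)
  case less
  let ?D = "\<lambda>g. {x\<in>A. (g x = Some i) \<noteq> (b x = Some 1)}"
  let ?t = "\<lambda>g. (\<lambda>x. if x \<in> A then (if b x = Some 1 then Some i else Some j) else g x)"
  have gW: "dom g = W" "\<forall>u\<in>W. \<forall>v\<in>W. E u v \<longrightarrow> g u \<noteq> g v" using less.prems(1) unfolding colorings_def by auto
  have inA: "x \<in> A \<longleftrightarrow> g x = Some i \<or> g x = Some j" for x using less.prems(2) gW(1) by auto
  have bA: "dom b = A" "ran b \<subseteq> {1..2}" "\<forall>u\<in>A. \<forall>v\<in>A. E u v \<longrightarrow> b u \<noteq> b v"
    using b unfolding colorings_def by auto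
  have bv: "x \<in> A \<Longrightarrow> b x = Some 1 \<or> b x = Some 2" for x
  proof -
    assume "x \<in> A" then obtain c where c: "b x = Some c" using bA(1) by auto
    then have "c \<in> {1..2}" using bA(2) by (auto simp: ran_def)
    then have "c = 1 \<or> c = 2" by auto
    then show ?thesis using c by auto
  qed
  show ?case
  proof (cases "?D g = {}")
    case True
    have "?t g = g"
    proof
      fix x show "?t g x = g x"
      proof (cases "x \<in> A")
        case True
        then have "(g x = Some i) = (b x = Some 1)" using \<open>?D g = {}\<close> by blast
        then show ?thesis using True inA[of x] by auto
      qed simp
    qed
    then show ?thesis unfolding kempe_equiv_def by simp
  next
    case False
    then obtain v where v: "v \<in> ?D g" by blast
    let ?C = "component_of E A v"
    define g1 where "g1 = (\<lambda>x. if x \<in> ?C then (if g x = Some i then Some j else Some i) else g x)"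
    have CA: "?C \<subseteq> A" by (rule comp_sub)
    note sp = switch_props[OF sym less.prems(1) ij less.prems(2)[symmetric] g1_def]
    define i0 where "i0 = min i j"
    define j0 where "j0 = max i j"
    have i0j0: "1 \<le> i0" "i0 < j0" "j0 \<le> k" using ij unfolding i0_def j0_def by auto
    have A0: "{x \<in> W. g x = Some i0 \<or> g x = Some j0} = A"
      using less.prems(2) unfolding i0_def j0_def by (auto simp: min_def max_def)
    have g1': "g1 = (\<lambda>x. if x \<in> component_of E {x \<in> W. g x = Some i0 \<or> g x = Some j0} v
          then (if g x = Some i0 then Some j0 else Some i0) else g x)"
    proof
      fix x show "g1 x = (if x \<in> component_of E {x \<in> W. g x = Some i0 \<or> g x = Some j0} v
          then (if g x = Some i0 then Some j0 else Some i0) else g x)"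
        unfolding A0 g1_def using CA inA[of x] ij(3) unfolding i0_def j0_def
        by (auto simp: min_def max_def)
    qed
    have vA: "v \<in> {x \<in> W. g x = Some i0 \<or> g x = Some j0}" using A0 v by auto
    have ks: "kempe_switch k E W g g1"
      unfolding kempe_switch_def Let_def using less.prems(1) i0j0 vA g1' by blast
    have g1col: "g1 \<in> colorings k E W" by (rule sp(1))
    have g1W: "dom g1 = W" using g1col unfolding colorings_def by auto
    have A1: "{x\<in>W. g1 x = Some i \<or> g1 x = Some j} = A"
    proof -
      have "{x\<in>W. g1 x = Some i \<or> g1 x = Some j} = cls g1 i \<union> cls g1 j" using g1W by auto
      also have "\<dots> = cls g i \<union> cls g j" using sp(3) by simp
      also have "\<dots> = A" using inA by auto
      finally show ?thesis .
    qed
    have t1: "?t g1 = ?t g" unfolding g1_def using CA by (auto intro!: ext)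
    have compD: "x \<in> ?D g" if "x \<in> ?C" for x
    proof -
      have r: "(\<lambda>x y. x \<in> A \<and> y \<in> A \<and> E x y)\<^sup>*\<^sup>* v x" using that unfolding component_of_def by auto
      have "((g x = Some i) \<noteq> (b x = Some 1)) = ((g v = Some i) \<noteq> (b v = Some 1))"
      proof (rule comp_D[OF r])
        fix y z assume yz: "y \<in> A" "z \<in> A" "E y z"
        have "g y \<noteq> g z" using gW(2) yz less.prems(2) by auto
        then have 1: "(g y = Some i) = (g z \<noteq> Some i)" using inA[of y] inA[of z] yz ij(3) by auto
        have "b y \<noteq> b z" using bA(3) yz by auto
        then have 2: "(b y = Some 1) = (b z \<noteq> Some 1)" using bv[of y] bv[of z] yz by auto
        show "((g y = Some i) \<noteq> (b y = Some 1)) = ((g z = Some i) \<noteq> (b z = Some 1))"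
          using 1 2 by blast
      qed
      then show ?thesis using v that CA by auto
    qed
    have D1: "?D g1 = ?D g - ?C"
    proof (intro set_eqI iffI)
      fix x assume x: "x \<in> ?D g1"
      show "x \<in> ?D g - ?C"
      proof (cases "x \<in> ?C")
        case True
        then have "x \<in> ?D g" by (rule compD)
        then have "g1 x = Some i \<longleftrightarrow> g x \<noteq> Some i" using True inA[of x] ij(3) unfolding g1_def by auto
        then show ?thesis using x \<open>x \<in> ?D g\<close> by auto
      next
        case False then show ?thesis using x unfolding g1_def by auto
      qed
    next
      fix x assume "x \<in> ?D g - ?C" then show "x \<in> ?D g1" unfolding g1_def by auto
    qed
    have vC: "v \<in> ?C" using v by (auto intro: comp_self)
    have finD: "finite (?D g)" using fin less.prems(2) by (auto intro: finite_subset)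
    have "card (?D g1) < card (?D g)" unfolding D1
      by (rule psubset_card_mono[OF finD]) (use v vC in blast)
    from less.hyps[OF this g1col A1] have "kempe_equiv k E W g1 (?t g1)" .
    then have "kempe_equiv k E W g1 (?t g)" using t1 by simp
    then show ?thesis unfolding kempe_equiv_def
      by (rule converse_rtranclp_into_rtranclp[rotated]) (use ks in blast)
  qed
qed



definition Ccls :: "nat \<Rightarrow> (nat \<Rightarrow> nat \<Rightarrow> bool) \<Rightarrow> nat set \<Rightarrow> (nat \<Rightarrow> nat option) \<Rightarrow> monom set" where
  "Ccls k E W f = {xmon k g | g. g \<in> colorings k E W \<and> kempe_equiv k E W g f}"

lemma ke_sym: "kempe_equiv k E W g h \<Longrightarrow> kempe_equiv k E W h g"
  unfolding kempe_equiv_def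
proof (induction rule: rtranclp_induct)
  case (step y z)
  have r: "(\<lambda>f g. kempe_switch k E W f g \<or> kempe_switch k E W g f \<or> color_perm k E W f g \<or> color_perm k E W g f) z y"
    using step.hyps(2) by blast
  show ?case by (rule converse_rtranclp_into_rtranclp[OF r step.IH])
qed simp

lemma ke_trans: "kempe_equiv k E W g h \<Longrightarrow> kempe_equiv k E W h f \<Longrightarrow> kempe_equiv k E W g f"
  unfolding kempe_equiv_def by (rule rtranclp_trans)

lemma C_closed_aux:
  assumes sym: "\<forall>u v. E u v \<longrightarrow> E v u" and fin: "finite W" and W: "W \<subseteq> {1..d}"
    and g: "g \<in> colorings k E W" and a: "a \<in> colorings 2 E W'" and b: "b \<in> colorings 2 E W'"
    and eq: "xmon k g = u + xmon 2 a"
  shows "\<exists>g'. g' \<in> colorings k E W \<and> kempe_equiv k E W g g' \<and> xmon k g' = u + xmon 2 b"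
proof -
  have "xmon k g = Poly_Mapping.single (cls a 1) 1 + Poly_Mapping.single (cls a 2) 1 + u"
    using eq by (simp add: xmon2 ac_simps)
  from xmon_decomp[OF this] obtain i j where ij: "i \<in> {1..k}" "j \<in> {1..k}" "i \<noteq> j"
    and ci: "cls g i = cls a 1" and cj: "cls g j = cls a 2" and u: "u = rest k g i j" by blast
  have aW: "dom a = W'" "ran a \<subseteq> {1..2}" using a unfolding colorings_def by auto
  have av: "x \<in> W' \<Longrightarrow> a x = Some 1 \<or> a x = Some 2" for x
  proof -
    assume "x \<in> W'" then obtain c where c: "a x = Some c" using aW(1) by auto
    then have "c \<in> {1..2}" using aW(2) by (auto simp: ran_def)
    then have "c = 1 \<or> c = 2" by auto
    then show ?thesis using c by auto
  qed
  have bW: "dom b = W'" "ran b \<subseteq> {1..2}" using b unfolding colorings_def by auto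
  have bv: "x \<in> W' \<Longrightarrow> b x = Some 1 \<or> b x = Some 2" for x
  proof -
    assume "x \<in> W'" then obtain c where c: "b x = Some c" using bW(1) by auto
    then have "c \<in> {1..2}" using bW(2) by (auto simp: ran_def)
    then have "c = 1 \<or> c = 2" by auto
    then show ?thesis using c by auto
  qed
  have gW: "dom g = W" using g unfolding colorings_def by auto
  have A: "{x\<in>W. g x = Some i \<or> g x = Some j} = W'"
  proof -
    have "{x\<in>W. g x = Some i \<or> g x = Some j} = cls g i \<union> cls g j" using gW by auto
    also have "\<dots> = cls a 1 \<union> cls a 2" using ci cj by simp
    also have "\<dots> = W'" using av aW(1) by auto
    finally show ?thesis .
  qed
  define g' where "g' = (\<lambda>x. if x \<in> W' then (if b x = Some 1 then Some i else Some j) else g x)"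
  have ke: "kempe_equiv k E W g g'" unfolding g'_def by (rule flip[OF sym fin ij b g A])
  have g'col: "g' \<in> colorings k E W"
    using kempe_equiv_K[OF sym W ke g] by blast
  have inW': "x \<in> W' \<longleftrightarrow> g x = Some i \<or> g x = Some j" for x using A gW by auto
  have c1: "cls g' i = cls b 1"
    unfolding g'_def using inW' bW(1) ij(3) by auto
  have c2: "cls g' j = cls b 2"
    unfolding g'_def using inW' bW(1) ij(3) bv by auto
  have r: "rest k g' i j = rest k g i j" unfolding rest_def
  proof (rule sum.cong[OF refl])
    fix l assume l: "l \<in> {1..k} - {i} - {j}"
    have "cls g' l = cls g l" unfolding g'_def using inW' l by auto
    then show "Poly_Mapping.single (cls g' l) 1 = Poly_Mapping.single (cls g l) 1" by simp
  qed
  have "xmon k g' = u + xmon 2 b"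
    unfolding xmon_split[OF ij, of g'] xmon2 c1 c2 r u by (simp add: ac_simps)
  then show ?thesis using ke g'col by blast
qed

lemma C_closed:
  assumes sym: "\<forall>u v. E u v \<longrightarrow> E v u" and fin: "finite W" and W: "W \<subseteq> {1..d}"
    and a: "a \<in> colorings 2 E W'" and b: "b \<in> colorings 2 E W'"
    and m: "u + xmon 2 a \<in> Ccls k E W f"
  shows "u + xmon 2 b \<in> Ccls k E W f"
proof -
  from m obtain g where g: "g \<in> colorings k E W" "kempe_equiv k E W g f" "xmon k g = u + xmon 2 a"
    unfolding Ccls_def by auto
  from C_closed_aux[OF sym fin W g(1) a b g(3)] obtain g' where
    g': "g' \<in> colorings k E W" "kempe_equiv k E W g g'" "xmon k g' = u + xmon 2 b" by blast
  have "kempe_equiv k E W g' f" using ke_trans[OF ke_sym[OF g'(2)] g(2)] .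
  then show ?thesis unfolding Ccls_def using g' by (metis (mono_tags, lifting) mem_Collect_eq)
qed

lemma C_notM:
  assumes m: "u + (Poly_Mapping.single S 1 + Poly_Mapping.single T 1) \<in> Ccls k E W f" and ST: "S \<inter> T \<noteq> {}"
  shows False
proof -
  from m obtain g where g: "xmon k g = u + (Poly_Mapping.single S 1 + Poly_Mapping.single T 1)"
    unfolding Ccls_def by auto
  then have "xmon k g = Poly_Mapping.single S 1 + Poly_Mapping.single T 1 + u" by (simp add: ac_simps)
  from xmon_decomp[OF this] obtain i j where "i \<noteq> j" "cls g i = S" "cls g j = T" by blast
  then show False using ST by auto
qed

lemma C_monoms:
  assumes "W \<subseteq> {1..d}" shows "Ccls k E W f \<subseteq> monoms d E"
  unfolding Ccls_def using xmon_monoms[OF _ assms] by blast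

lemma phi_C_K:
  assumes sym: "\<forall>u v. E u v \<longrightarrow> E v u" and fin: "finite W" and W: "W \<subseteq> {1..d}"
    and p: "(p :: 'a::field mpoly) \<in> K_ideal d E"
  shows "phi (Ccls k E W f) p = 0"
proof (rule phi_ideal_zero[OF _ p[unfolded K_ideal_def]])
  fix g :: "'a mpoly" and u c
  assume "g \<in> J_gens d E \<union> M_gens d E"
  then show "phi (Ccls k E W f) (Poly_Mapping.single u c * g) = 0"
  proof
    assume "g \<in> J_gens d E"
    then obtain W' a b where ab: "a \<in> colorings 2 E W'" "b \<in> colorings 2 E W'"
      and g: "g = mono_poly (xmon 2 a) - mono_poly (xmon 2 b)"
      unfolding J_gens_def by blast
    have iff: "u + xmon 2 a \<in> Ccls k E W f \<longleftrightarrow> u + xmon 2 b \<in> Ccls k E W f"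
      using C_closed[OF sym fin W ab(1) ab(2)] C_closed[OF sym fin W ab(2) ab(1)] by blast
    have "Poly_Mapping.single u c * g = Poly_Mapping.single (u + xmon 2 a) c - Poly_Mapping.single (u + xmon 2 b) c"
      unfolding g mono_poly_def by (simp add: right_diff_distrib mult_single)
    then show ?thesis using iff by (simp add: phi_diff phi_single)
  next
    assume "g \<in> M_gens d E"
    then obtain S T where ST: "S \<inter> T \<noteq> {}"
      and g: "g = mono_poly (Poly_Mapping.single S 1 + Poly_Mapping.single T 1)"
      unfolding M_gens_def by blast
    have "Poly_Mapping.single u c * g = Poly_Mapping.single (u + (Poly_Mapping.single S 1 + Poly_Mapping.single T 1)) c"
      unfolding g mono_poly_def by (simp add: mult_single)
    moreover have "u + (Poly_Mapping.single S 1 + Poly_Mapping.single T 1) \<notin> Ccls k E W f"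
      using C_notM[OF _ ST] by blast
    ultimately show ?thesis by (simp add: phi_single)
  qed
qed



lemma K_polys: "K_ideal d E \<subseteq> (polys d E :: 'a::field mpoly set)"
  unfolding K_ideal_def
proof (rule ideal_gen_subset, rule subsetI)
  fix g :: "'a mpoly" assume "g \<in> J_gens d E \<union> M_gens d E"
  then show "g \<in> polys d E"
  proof
    assume "g \<in> J_gens d E"
    then obtain W' a b where ab: "W' \<subseteq> {1..d}" "a \<in> colorings 2 E W'" "b \<in> colorings 2 E W'"
      and g: "g = mono_poly (xmon 2 a) - mono_poly (xmon 2 b)"
      unfolding J_gens_def by blast
    show ?thesis unfolding g
      by (intro polys_diff polys_mono xmon_monoms[OF _ ab(1)] ab(2,3))
  next
    assume "g \<in> M_gens d E"
    then obtain S T where ST: "S \<in> stable_sets d E" "T \<in> stable_sets d E"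
      and g: "g = mono_poly (Poly_Mapping.single S 1 + Poly_Mapping.single T 1)"
      unfolding M_gens_def by blast
    show ?thesis unfolding g by (intro polys_mono monoms_add monoms_single ST)
  qed
qed

lemma init_gen:
  assumes "(p :: 'a::field mpoly) \<in> K_ideal d E" "p \<noteq> 0"
  shows "(mono_poly (lead_mon ord p) :: 'a::field mpoly) \<in> init_ideal d E ord (K_ideal d E)"
  unfolding init_ideal_def by (rule ideal_gen_gen) (use assms in blast)

lemma mono_ne0[simp]: "(mono_poly m :: 'a::field mpoly) \<noteq> 0"
  unfolding mono_poly_def by (metis lookup_single_eq lookup_zero one_neq_zero)

lemma existence:
  assumes sym: "\<forall>u v. E u v \<longrightarrow> E v u" and W: "W \<subseteq> {1..d}" and mo: "monomial_order d E ord"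
    and f: "f \<in> colorings k E W"
  shows "\<exists>s\<in>Ccls k E W f. s \<in> std_monoms TYPE('a::field) d E ord k"
proof -
  have fin: "finite W" using W finite_subset by blast
  let ?C = "Ccls k E W f"
  let ?R = "\<lambda>a b. a \<in> monoms d E \<and> b \<in> monoms d E \<and> ord a b"
  have Cm: "?C \<subseteq> monoms d E" by (rule C_monoms[OF W])
  have fC: "xmon k f \<in> ?C" unfolding Ccls_def kempe_equiv_def using f by blast
  have wfR: "wfP ?R" by (rule mo_wf[OF mo])
  have "\<exists>z\<in>?C. \<forall>y. ?R y z \<longrightarrow> y \<notin> ?C"
    by (rule wfp_eq_minimal[THEN iffD1, rule_format, OF wfR fC])
  then obtain s where s: "s \<in> ?C" and smin: "\<And>y. ?R y s \<Longrightarrow> y \<notin> ?C" by blast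
  have sm: "s \<in> monoms d E" using s Cm by blast
  have sdeg: "mdeg s = k" using s unfolding Ccls_def by (auto simp: mdeg_xmon)
  have notin: "(mono_poly s :: 'a mpoly) \<notin> init_ideal d E ord (K_ideal d E)"
  proof
    assume "(mono_poly s :: 'a mpoly) \<in> init_ideal d E ord (K_ideal d E)"
    then obtain n :: nat and q gg where h: "\<forall>i<n. q i \<in> polys d E \<and> gg i \<in> {mono_poly (lead_mon ord p) | p. p \<in> K_ideal d E \<and> p \<noteq> (0 :: 'a mpoly)}"
      "(mono_poly s :: 'a mpoly) = (\<Sum>i<n. q i * gg i)"
      unfolding init_ideal_def by (rule ideal_genE)
    have "(1::'a) = Poly_Mapping.lookup (mono_poly s :: 'a mpoly) s" by (simp add: mono_poly_def)
    also have "\<dots> = (\<Sum>i<n. Poly_Mapping.lookup (q i * gg i) s)" unfolding h(2) by (simp add: lookup_sum)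
    finally have "(\<Sum>i<n. Poly_Mapping.lookup (q i * gg i) s) \<noteq> 0" by (metis one_neq_zero)
    then obtain i where i: "i < n" "Poly_Mapping.lookup (q i * gg i) s \<noteq> 0"
      by (meson lessThan_iff sum.not_neutral_contains_not_neutral)
    have "gg i \<in> {mono_poly (lead_mon ord p) | p. p \<in> K_ideal d E \<and> p \<noteq> (0 :: 'a mpoly)}"
      using h(1) i(1) by simp
    then obtain p :: "'a mpoly" where p: "p \<in> K_ideal d E" "p \<noteq> 0" "gg i = mono_poly (lead_mon ord p)"
      unfolding mem_Collect_eq by (elim exE conjE) simp
    have pP: "p \<in> polys d E" using p(1) K_polys by blast
    note lp = lead_mon_prop[OF mo pP p(2)]
    let ?l = "lead_mon ord p"
    have "s \<in> Poly_Mapping.keys (q i * mono_poly ?l)" using i(2) p(3) by (simp add: in_keys_iff)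
    then obtain u where u: "u \<in> Poly_Mapping.keys (q i)" "s = u + ?l"
      using keys_mult[of "q i" "mono_poly ?l"] unfolding mono_poly_def by auto
    have um: "u \<in> monoms d E" using u(1) h(1) i(1) unfolding polys_def by blast
    have lm: "?l \<in> monoms d E" using lp pP unfolding polys_def by blast
    let ?p' = "mono_poly u * p"
    have p'K: "?p' \<in> K_ideal d E" unfolding K_ideal_def
      by (rule ideal_gen_mult[OF p(1)[unfolded K_ideal_def] polys_mono[OF um]])
    have ls: "Poly_Mapping.lookup ?p' s \<noteq> 0" unfolding u(2) lookup_mono_mult using lp by (simp add: in_keys_iff)
    have phi0: "phi ?C ?p' = 0" by (rule phi_C_K[OF sym fin W p'K])
    have "\<exists>m'\<in>Poly_Mapping.keys ?p'. m' \<in> ?C \<and> m' \<noteq> s"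
    proof (rule ccontr)
      assume na: "\<not> ?thesis"
      have sk: "s \<in> Poly_Mapping.keys ?p'" using ls by (simp add: in_keys_iff)
      have "phi ?C ?p' = (if s \<in> ?C then Poly_Mapping.lookup ?p' s else 0) +
          (\<Sum>m\<in>Poly_Mapping.keys ?p' - {s}. if m \<in> ?C then Poly_Mapping.lookup ?p' m else 0)"
        unfolding phi_def by (rule sum.remove[OF finite_keys sk])
      also have "(\<Sum>m\<in>Poly_Mapping.keys ?p' - {s}. if m \<in> ?C then Poly_Mapping.lookup ?p' m else 0) = 0"
        by (rule sum.neutral) (use na in auto)
      finally have "phi ?C ?p' = Poly_Mapping.lookup ?p' s" using s by simp
      then show False using phi0 ls by simp
    qed
    then obtain m' where m': "m' \<in> Poly_Mapping.keys ?p'" "m' \<in> ?C" "m' \<noteq> s" by blast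
    obtain nn where nn: "nn \<in> Poly_Mapping.keys p" "m' = u + nn" using keys_mono_mult[OF m'(1)] by blast
    have "nn \<noteq> ?l" using nn m'(3) u(2) by auto
    then have "ord nn ?l" using lp nn(1) by blast
    moreover have nm: "nn \<in> monoms d E" using nn(1) pP unfolding polys_def by blast
    ultimately have "ord (nn + u) (?l + u)" using mo_add[OF mo nm lm um] by blast
    then have "ord m' s" using nn(2) u(2) by (simp add: ac_simps)
    then have "?R m' s" using m'(2) Cm sm by blast
    then show False using smin m'(2) by blast
  qed
  show ?thesis using s sm sdeg notin unfolding std_monoms_def by blast
qed

lemma uniqueness:
  assumes sym: "\<forall>u v. E u v \<longrightarrow> E v u" and W: "W \<subseteq> {1..d}" and mo: "monomial_order d E ord"
    and m1: "m1 \<in> std_monoms TYPE('a::field) d E ord k" and m2: "m2 \<in> std_monoms TYPE('a) d E ord k"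
    and g1: "g1 \<in> colorings k E W" "m1 = xmon k g1" "kempe_equiv k E W g1 f"
    and g2: "g2 \<in> colorings k E W" "m2 = xmon k g2" "kempe_equiv k E W g2 f"
  shows "m1 = m2"
proof (rule ccontr)
  assume ne: "m1 \<noteq> m2"
  have "kempe_equiv k E W g1 g2" using ke_trans[OF g1(3) ke_sym[OF g2(3)]] .
  then have pK: "(mono_poly m1 - mono_poly m2 :: 'a mpoly) \<in> K_ideal d E"
    using kempe_equiv_K[OF sym W _ g1(1)] g1(2) g2(2) by blast
  let ?p = "mono_poly m1 - mono_poly m2 :: 'a mpoly"
  have "Poly_Mapping.lookup ?p m1 = 1" using ne by (simp add: mono_poly_def lookup_minus lookup_single)
  then have p0: "?p \<noteq> 0" by auto
  have pP: "?p \<in> polys d E" using pK K_polys by blast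
  have "lead_mon ord ?p \<in> Poly_Mapping.keys ?p" using lead_mon_prop[OF mo pP p0] by blast
  then have "lead_mon ord ?p \<in> {m1, m2}" using keys_diff[of "mono_poly m1" "mono_poly m2"]
    unfolding mono_poly_def by auto
  moreover have "(mono_poly (lead_mon ord ?p) :: 'a mpoly) \<in> init_ideal d E ord (K_ideal d E)"
    by (rule init_gen[OF pK p0])
  ultimately show False using m1 m2 unfolding std_monoms_def by auto
qed



lemma sum_split2:
  assumes "finite L" "i \<in> L" "j \<in> L" "i \<noteq> j"
  shows "sum F L = F i + F j + sum F (L - {i} - {j})"
proof -
  have "sum F L = F i + sum F (L - {i})" by (rule sum.remove) (use assms in auto)
  also have "sum F (L - {i}) = F j + sum F (L - {i} - {j})" by (rule sum.remove) (use assms in auto)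
  finally show ?thesis by (simp add: add.assoc)
qed

lemma keys_sub_add: "Poly_Mapping.keys (u :: monom) \<subseteq> Poly_Mapping.keys (u + v)"
  by (auto simp: in_keys_iff lookup_add)

lemma std_nonM:
  assumes mo: "monomial_order d E ord" and m: "m \<in> std_monoms TYPE('a::field) d E ord k"
    and eq: "m = u + (Poly_Mapping.single S 1 + Poly_Mapping.single T 1)"
  shows "S \<inter> T = {}"
proof (rule ccontr)
  assume ST: "S \<inter> T \<noteq> {}"
  have mm: "m \<in> monoms d E" and ni: "(mono_poly m :: 'a mpoly) \<notin> init_ideal d E ord (K_ideal d E)"
    using m unfolding std_monoms_def by auto
  have km: "Poly_Mapping.keys m \<subseteq> stable_sets d E" using mm unfolding monoms_def by simp
  have "S \<in> Poly_Mapping.keys m" "T \<in> Poly_Mapping.keys m" unfolding eq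
    by (auto simp: in_keys_iff lookup_add lookup_single)
  then have SsT: "S \<in> stable_sets d E" "T \<in> stable_sets d E" using km by auto
  have um: "u \<in> monoms d E" using km keys_sub_add[of u] unfolding eq monoms_def by blast
  let ?G = "mono_poly (Poly_Mapping.single S 1 + Poly_Mapping.single T 1) :: 'a mpoly"
  have "?G \<in> M_gens d E" unfolding M_gens_def using SsT ST by blast
  then have GK: "?G \<in> K_ideal d E" by (rule K_M)
  have "(mono_poly (lead_mon ord ?G) :: 'a mpoly) \<in> init_ideal d E ord (K_ideal d E)"
    by (rule init_gen[OF GK mono_ne0])
  then have "?G \<in> init_ideal d E ord (K_ideal d E)" by (simp only: lead_mon_mono)
  then have "mono_poly u * ?G \<in> init_ideal d E ord (K_ideal d E)"
    unfolding init_ideal_def by (rule ideal_gen_mult[OF _ polys_mono[OF um]])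
  then have "(mono_poly m :: 'a mpoly) \<in> init_ideal d E ord (K_ideal d E)"
    unfolding eq mono_mult .
  then show False using ni by blast
qed

lemma decomp:
  "mdeg m = k \<Longrightarrow> \<exists>S. m = (\<Sum>l\<in>{1..k}. Poly_Mapping.single (S l) 1) \<and> (\<forall>l\<in>{1..k}. S l \<in> Poly_Mapping.keys m)"
proof (induction k arbitrary: m)
  case 0
  have "\<forall>S\<in>Poly_Mapping.keys m. Poly_Mapping.lookup m S = 0"
    using 0 unfolding mdeg_def by (simp add: sum_eq_0_iff)
  then have "m = 0" by (metis in_keys_iff keys_eq_empty ex_in_conv)
  then show ?case by simp
next
  case (Suc k)
  have "Poly_Mapping.keys m \<noteq> {}" using Suc.prems unfolding mdeg_def by auto
  then obtain T where T: "T \<in> Poly_Mapping.keys m" by blast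
  define m' where "m' = m - Poly_Mapping.single T 1"
  have mm': "m = m' + Poly_Mapping.single T 1"
  proof (rule poly_mapping_eqI)
    fix x
    show "Poly_Mapping.lookup m x = Poly_Mapping.lookup (m' + Poly_Mapping.single T 1) x"
      using T unfolding m'_def by (auto simp: lookup_add lookup_minus lookup_single in_keys_iff when_def)
  qed
  have "mdeg m' = k" using Suc.prems unfolding mm' mdeg_add mdeg_single by simp
  from Suc.IH[OF this] obtain S' where S': "m' = (\<Sum>l\<in>{1..k}. Poly_Mapping.single (S' l) 1)"
    "\<forall>l\<in>{1..k}. S' l \<in> Poly_Mapping.keys m'" by blast
  define S where "S = S'(Suc k := T)"
  have "(\<Sum>l\<in>{1..Suc k}. Poly_Mapping.single (S l) 1) = (\<Sum>l\<in>{1..k}. Poly_Mapping.single (S l) 1) + Poly_Mapping.single (S (Suc k)) (1::nat)"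
    by (simp add: sum.cl_ivl_Suc)
  also have "(\<Sum>l\<in>{1..k}. Poly_Mapping.single (S l) 1) = m'" unfolding S' S_def
    by (rule sum.cong) auto
  finally have e: "m = (\<Sum>l\<in>{1..Suc k}. Poly_Mapping.single (S l) 1)" unfolding mm' S_def by simp
  have "\<forall>l\<in>{1..Suc k}. S l \<in> Poly_Mapping.keys m"
    using S'(2) T keys_sub_add[of m' "Poly_Mapping.single T 1"] unfolding S_def mm'[symmetric]
    by (auto simp: le_Suc_eq)
  then show ?case using e by blast
qed



theorem theorem6p6:
  fixes d k :: nat and E :: "nat \<Rightarrow> nat \<Rightarrow> bool"
    and ord :: "monom \<Rightarrow> monom \<Rightarrow> bool"
  assumes "simple_graph_on d E"
    and "k \<ge> 1"
    and "monomial_order d E ord"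
  shows "(\<forall>m\<in>std_monoms TYPE('a::field) d E ord k.
            (\<exists>S :: nat \<Rightarrow> nat set.
               (\<forall>l\<in>{1..k}. S l \<in> stable_sets d E) \<and>
               (\<forall>l\<in>{1..k}. \<forall>l'\<in>{1..k}. l \<noteq> l' \<longrightarrow> S l \<inter> S l' = {}) \<and>
               m = (\<Sum>l\<in>{1..k}. Poly_Mapping.single (S l) 1) \<and>
               (let W = (\<Union>l\<in>{1..k}. S l);
                    f = (\<lambda>v. if v \<in> W then Some (THE l. l \<in> {1..k} \<and> v \<in> S l) else None)
                in f \<in> colorings k E W \<and> m = xmon k f)))
       \<and> (\<forall>W. W \<subseteq> {1..d} \<longrightarrow>
            (\<forall>f\<in>colorings k E W. \<exists>!m. m \<in> std_monoms TYPE('a) d E ord k \<and>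
               (\<exists>g\<in>colorings k E W. m = xmon k g \<and> kempe_equiv k E W g f)))"
proof -
  have sym: "\<forall>u v. E u v \<longrightarrow> E v u" using assms(1) unfolding simple_graph_on_def by blast
  have mo: "monomial_order d E ord" by (rule assms(3))
  have P1: "\<exists>S :: nat \<Rightarrow> nat set.
               (\<forall>l\<in>{1..k}. S l \<in> stable_sets d E) \<and>
               (\<forall>l\<in>{1..k}. \<forall>l'\<in>{1..k}. l \<noteq> l' \<longrightarrow> S l \<inter> S l' = {}) \<and>
               m = (\<Sum>l\<in>{1..k}. Poly_Mapping.single (S l) 1) \<and>
               (let W = (\<Union>l\<in>{1..k}. S l);
                    f = (\<lambda>v. if v \<in> W then Some (THE l. l \<in> {1..k} \<and> v \<in> S l) else None)
                in f \<in> colorings k E W \<and> m = xmon k f)"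
    if m: "m \<in> std_monoms TYPE('a::field) d E ord k" for m
  proof -
    have mm: "m \<in> monoms d E" and md: "mdeg m = k" using m unfolding std_monoms_def by auto
    from decomp[OF md] obtain S where S: "m = (\<Sum>l\<in>{1..k}. Poly_Mapping.single (S l) 1)"
      "\<forall>l\<in>{1..k}. S l \<in> Poly_Mapping.keys m" by blast
    have st: "\<forall>l\<in>{1..k}. S l \<in> stable_sets d E" using S(2) mm unfolding monoms_def by blast
    have dj: "\<forall>l\<in>{1..k}. \<forall>l'\<in>{1..k}. l \<noteq> l' \<longrightarrow> S l \<inter> S l' = {}"
    proof (intro ballI impI)
      fix l l' assume l: "l \<in> {1..k}" "l' \<in> {1..k}" "l \<noteq> l'"
      have "m = Poly_Mapping.single (S l) 1 + Poly_Mapping.single (S l') 1 +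
          (\<Sum>i\<in>{1..k}-{l}-{l'}. Poly_Mapping.single (S i) 1)"
        unfolding S(1) by (rule sum_split2) (use l in auto)
      then have "m = (\<Sum>i\<in>{1..k}-{l}-{l'}. Poly_Mapping.single (S i) 1) +
          (Poly_Mapping.single (S l) 1 + Poly_Mapping.single (S l') 1)" by (simp add: ac_simps)
      then show "S l \<inter> S l' = {}" by (rule std_nonM[OF mo m])
    qed
    define W where "W = (\<Union>l\<in>{1..k}. S l)"
    define f where "f = (\<lambda>v. if v \<in> W then Some (THE l. l \<in> {1..k} \<and> v \<in> S l) else None)"
    have the: "(THE l. l \<in> {1..k} \<and> v \<in> S l) = l0" if "l0 \<in> {1..k}" "v \<in> S l0" for v l0
      by (rule the_equality) (use that dj in blast)+
    have cl: "cls f l = S l" if "l \<in> {1..k}" for l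
    proof (intro set_eqI iffI; simp)
      fix v assume "f v = Some l"
      then have vW: "v \<in> W" and t: "(THE l. l \<in> {1..k} \<and> v \<in> S l) = l" unfolding f_def by (auto split: if_splits)
      from vW obtain l0 where "l0 \<in> {1..k}" "v \<in> S l0" unfolding W_def by blast
      then show "v \<in> S l" using the t by metis
    next
      fix v assume "v \<in> S l"
      then show "f v = Some l" unfolding f_def W_def using the[OF that] that by auto
    qed
    have fcol: "f \<in> colorings k E W"
    proof -
      have "dom f = W" unfolding f_def dom_def by auto
      moreover have "ran f \<subseteq> {1..k}"
      proof
        fix c assume "c \<in> ran f"
        then obtain v where v: "f v = Some c" unfolding ran_def by auto
        then have "v \<in> W" unfolding f_def by (auto split: if_splits)
        then obtain l0 where l0: "l0 \<in> {1..k}" "v \<in> S l0" unfolding W_def by blast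
        then have "f v = Some l0" unfolding f_def W_def using the[OF l0] by auto
        then show "c \<in> {1..k}" using v l0 by simp
      qed
      moreover have "f u \<noteq> f v" if "u \<in> W" "v \<in> W" "E u v" for u v
      proof
        assume eq: "f u = f v"
        from that obtain lu lv where lu: "lu \<in> {1..k}" "u \<in> S lu" and lv: "lv \<in> {1..k}" "v \<in> S lv"
          unfolding W_def by blast
        have "f u = Some lu" "f v = Some lv" unfolding f_def W_def using the[OF lu] the[OF lv] lu lv by auto
        then have "lu = lv" using eq by simp
        then have "u \<in> S lu" "v \<in> S lu" using lu lv by auto
        then show False using st lu(1) that(3) unfolding stable_sets_def by blast
      qed
      ultimately show ?thesis unfolding colorings_def by blast
    qed
    have "xmon k f = m" unfolding xmon_def S(1) by (rule sum.cong) (auto simp: cl)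
    then have "f \<in> colorings k E W \<and> m = xmon k f" using fcol by simp
    then have "(let W = (\<Union>l\<in>{1..k}. S l);
                    f = (\<lambda>v. if v \<in> W then Some (THE l. l \<in> {1..k} \<and> v \<in> S l) else None)
                in f \<in> colorings k E W \<and> m = xmon k f)" unfolding Let_def W_def f_def by simp
    then show ?thesis using st dj S(1) by blast
  qed
  have P2: "\<exists>!m. m \<in> std_monoms TYPE('a) d E ord k \<and>
               (\<exists>g\<in>colorings k E W. m = xmon k g \<and> kempe_equiv k E W g f)"
    if W: "W \<subseteq> {1..d}" and f: "f \<in> colorings k E W" for W f
  proof -
    from existence[OF sym W mo f] obtain s where s: "s \<in> Ccls k E W f" "s \<in> std_monoms TYPE('a) d E ord k"
      by blast
    from s(1) obtain g where g: "g \<in> colorings k E W" "kempe_equiv k E W g f" "s = xmon k g"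
      unfolding Ccls_def by blast
    show ?thesis
    proof (rule ex1I[of _ s])
      show "s \<in> std_monoms TYPE('a) d E ord k \<and> (\<exists>g\<in>colorings k E W. s = xmon k g \<and> kempe_equiv k E W g f)"
        using s(2) g by blast
    next
      fix m assume m: "m \<in> std_monoms TYPE('a) d E ord k \<and> (\<exists>g\<in>colorings k E W. m = xmon k g \<and> kempe_equiv k E W g f)"
      then obtain g' where g': "g' \<in> colorings k E W" "m = xmon k g'" "kempe_equiv k E W g' f" by blast
      show "m = s" by (rule uniqueness[OF sym W mo _ s(2) g' g(1) g(3) g(2)]) (use m in blast)
    qed
  qed
  show ?thesis
    apply (intro conjI ballI allI impI)
     apply (rule P1, assumption)
    apply (rule P2; assumption)
    done
qed

end
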